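(* Let $\mu_1,\mu_2$ be probability measures on $\mathbb{R}$ with characteristic functions $\varphi_j(u)=\int e^{iux}\mu_j(dx)$ and moment generating functions $\phi_j(v)=\int e^{vx}\mu_j(dx)$, $j=1,2$. Assume there is $\lambda>0$ with $\phi_1(\lambda)<\infty$ and $\phi_2(\lambda)<\infty$, and there is an open interval $I$ such that $\varphi_1(u)=\varphi_2(u)$ for all $u\in I$. Then $\mu_1=\mu_2$. *)

theory Defs
  imports "HOL-Probability.Probability"
begin

end

theory Submission imports Defs "HOL-Complex_Analysis.Complex_Analysis" begin

definition FF :: "real measure \<Rightarrow> complex \<Rightarrow> complex" where
  "FF M z = (CLINT x|M. exp (\<i> * z * complex_of_real x))"

lemma norm_eixz: "norm (exp (\<i> * z * complex_of_real x)) = exp (- Im z * x)"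
  by (simp add: norm_exp_eq_Re)

lemma exp_le_aux: fixes v l x :: real assumes "0 \<le> v" "v \<le> l" shows "exp (v * x) \<le> 1 + exp (l * x)"
proof (cases "x \<ge> 0")
  case True then have "v * x \<le> l * x" using assms by (intro mult_right_mono)
  then show ?thesis by (smt (verit) exp_gt_zero exp_le_cancel_iff)
next
  case False then have "v * x \<le> 0" using assms by (simp add: mult_nonneg_nonpos)
  then show ?thesis by (smt (verit) exp_gt_zero exp_le_one_iff)
qed

lemma open_S: "open {z. a < Re z \<and> Re z < b \<and> c < Im z \<and> Im z < d}"
  by (intro open_Collect_conj open_Collect_less continuous_intros)

lemma open_T: "open {z. c < Im z \<and> Im z < d}"
  by (intro open_Collect_conj open_Collect_less continuous_intros)

lemma convex_S: "convex {z. a < Re z \<and> Re z < b \<and> c < Im z \<and> Im z < d}"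
proof -
  have "{z. a < Re z \<and> Re z < b \<and> c < Im z \<and> Im z < d} = {z. Re z > a} \<inter> {z. Re z < b} \<inter> {z. Im z > c} \<inter> {z. Im z < d}" by auto
  then show ?thesis by (simp add: convex_Int convex_halfspace_Re_gt convex_halfspace_Re_lt convex_halfspace_Im_gt convex_halfspace_Im_lt)
qed

context
  fixes M :: "real measure" and l :: real
  assumes RD: "real_distribution M" and lpos: "l > 0"
    and fin: "(\<integral>\<^sup>+ x. ennreal (exp (l * x)) \<partial>M) < \<infinity>"
begin

interpretation real_distribution M by (rule RD)

lemma int_expl: "integrable M (\<lambda>x. exp (l * x))"
  by (rule integrableI_nonneg) (use fin in auto)

lemma int_W: "integrable M (\<lambda>x. 1 + exp (l * x))"
  using int_expl by simp

lemma int_expv: assumes "0 \<le> v" "v \<le> l" shows "integrable M (\<lambda>x. exp (v * x))"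
  by (rule Bochner_Integration.integrable_bound[OF int_W]) (use exp_le_aux[OF assms] in auto)

lemma int_F: assumes "-l \<le> Im z" "Im z \<le> 0" shows "integrable M (\<lambda>x. exp (\<i> * z * complex_of_real x))"
  by (rule Bochner_Integration.integrable_bound[OF int_expv[of "- Im z"]]) (use assms in \<open>auto simp: norm_eixz\<close>)


lemma cont_F: "continuous_on {z. -l \<le> Im z \<and> Im z \<le> 0} (FF M)"
  unfolding continuous_on_def
proof (intro ballI)
  fix z assume z: "z \<in> {z. -l \<le> Im z \<and> Im z \<le> 0}"
  show "(FF M \<longlongrightarrow> FF M z) (at z within {z. -l \<le> Im z \<and> Im z \<le> 0})"
    unfolding tendsto_at_iff_sequentially comp_def
  proof (intro allI impI)
    fix X assume X: "\<forall>i. X i \<in> {z. -l \<le> Im z \<and> Im z \<le> 0} - {z}" "X \<longlonglongrightarrow> z"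
    show "(\<lambda>i. FF M (X i)) \<longlonglongrightarrow> FF M z"
      unfolding FF_def
    proof (rule integral_dominated_convergence[where w="\<lambda>x. 1 + exp (l * x)"])
      show "(\<lambda>x. exp (\<i> * z * complex_of_real x)) \<in> borel_measurable M" by measurable
      show "(\<lambda>x. exp (\<i> * X i * complex_of_real x)) \<in> borel_measurable M" for i by measurable
      show "integrable M (\<lambda>x. 1 + exp (l * x))" by (rule int_W)
      show "AE x in M. (\<lambda>i. exp (\<i> * X i * complex_of_real x)) \<longlonglongrightarrow> exp (\<i> * z * complex_of_real x)"
        using X(2) by (intro AE_I2 tendsto_intros)
      show "AE x in M. norm (exp (\<i> * X i * complex_of_real x)) \<le> 1 + exp (l * x)" for i
      proof (intro AE_I2)
        fix x
        have "0 \<le> - Im (X i)" "- Im (X i) \<le> l" using X(1)[rule_format, of i] by auto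
        then show "norm (exp (\<i> * X i * complex_of_real x)) \<le> 1 + exp (l * x)"
          unfolding norm_eixz by (rule exp_le_aux)
      qed
    qed
  qed
qed

lemma exp_diff_bound:
  fixes h :: complex and x d :: real
  assumes "norm h \<le> d" "h \<noteq> 0" "d > 0"
  shows "norm (exp (\<i> * h * complex_of_real x) - 1) / norm h \<le> exp (2 * d * \<bar>x\<bar>) / d"
proof -
  have "norm (exp (\<i> * h * complex_of_real x) - 1) \<le> exp (norm (\<i> * h * complex_of_real x)) * norm (\<i> * h * complex_of_real x)"
    using Taylor_exp_field[of "\<i> * h * complex_of_real x" 0] by simp
  also have "norm (\<i> * h * complex_of_real x) = norm h * \<bar>x\<bar>" by (simp add: norm_mult)
  finally have 1: "norm (exp (\<i> * h * complex_of_real x) - 1) / norm h \<le> exp (norm h * \<bar>x\<bar>) * \<bar>x\<bar>"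
    using assms by (simp add: divide_simps mult.commute mult.left_commute)
  have 2: "exp (norm h * \<bar>x\<bar>) \<le> exp (d * \<bar>x\<bar>)" using assms by (simp add: mult_right_mono)
  have 3: "\<bar>x\<bar> \<le> exp (d * \<bar>x\<bar>) / d"
  proof -
    have "d * \<bar>x\<bar> \<le> exp (d * \<bar>x\<bar>)" using exp_ge_add_one_self[of "d * \<bar>x\<bar>"] by linarith
    then show ?thesis using assms by (simp add: field_simps)
  qed
  have "exp (norm h * \<bar>x\<bar>) * \<bar>x\<bar> \<le> exp (d * \<bar>x\<bar>) * (exp (d * \<bar>x\<bar>) / d)"
    using 2 3 by (intro mult_mono) auto
  also have "\<dots> = exp (d * \<bar>x\<bar> + d * \<bar>x\<bar>) / d" by (simp add: mult_exp_exp)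
  also have "d * \<bar>x\<bar> + d * \<bar>x\<bar> = 2 * d * \<bar>x\<bar>" by simp
  finally show ?thesis using 1 by linarith
qed

lemma deriv_F:
  assumes z0: "-l < Im z0" "Im z0 < 0"
  shows "(FF M has_field_derivative (CLINT x|M. exp (\<i> * z0 * complex_of_real x) * (\<i> * complex_of_real x))) (at z0)"
proof -
  define v0 where "v0 = - Im z0"
  define d where "d = min v0 (l - v0) / 2"
  have d: "d > 0" "v0 + 2*d \<le> l" "0 \<le> v0 - 2*d" using z0 unfolding d_def v0_def by auto
  define w where "w x = (exp ((v0 + 2*d) * x) + exp ((v0 - 2*d) * x)) / d" for x
  have intw: "integrable M w"
    unfolding w_def using int_expv[of "v0 + 2*d"] int_expv[of "v0 - 2*d"] d by auto
  have bnd: "norm ((exp (\<i> * y * complex_of_real x) - exp (\<i> * z0 * complex_of_real x)) / (y - z0)) \<le> w x"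
    if y: "norm (y - z0) \<le> d" "y \<noteq> z0" for y and x :: real
  proof -
    have e: "exp (\<i> * y * complex_of_real x) - exp (\<i> * z0 * complex_of_real x)
      = exp (\<i> * z0 * complex_of_real x) * (exp (\<i> * (y - z0) * complex_of_real x) - 1)"
      by (simp add: exp_add[symmetric] algebra_simps)
    have "norm ((exp (\<i> * y * complex_of_real x) - exp (\<i> * z0 * complex_of_real x)) / (y - z0))
       = exp (v0 * x) * (norm (exp (\<i> * (y - z0) * complex_of_real x) - 1) / norm (y - z0))"
      unfolding e by (simp add: norm_mult norm_divide norm_eixz v0_def)
    also have "\<dots> \<le> exp (v0 * x) * (exp (2 * d * \<bar>x\<bar>) / d)"
      using exp_diff_bound[of "y - z0" d x] y d by (intro mult_left_mono) auto
    also have "\<dots> = exp (v0 * x + 2 * d * \<bar>x\<bar>) / d" by (simp add: exp_add)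
    also have "\<dots> \<le> w x"
    proof (cases "x \<ge> 0")
      case True
      then have "v0 * x + 2 * d * \<bar>x\<bar> = (v0 + 2*d) * x" by (simp add: algebra_simps)
      then show ?thesis unfolding w_def using d by (simp add: divide_right_mono)
    next
      case False
      then have "v0 * x + 2 * d * \<bar>x\<bar> = (v0 - 2*d) * x" by (simp add: algebra_simps)
      then show ?thesis unfolding w_def using d by (simp add: divide_right_mono)
    qed
    finally show ?thesis .
  qed
  show ?thesis
    unfolding has_field_derivative_iff tendsto_at_iff_sequentially comp_def
  proof (intro allI impI)
    fix X assume X: "\<forall>i. X i \<in> UNIV - {z0}" "X \<longlonglongrightarrow> z0"
    obtain N where N: "\<And>n. n \<ge> N \<Longrightarrow> norm (X n - z0) < d"
      using X(2) d(1) unfolding LIMSEQ_iff by blast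
    show "(\<lambda>i. (FF M (X i) - FF M z0) / (X i - z0)) \<longlonglongrightarrow> (CLINT x|M. exp (\<i> * z0 * complex_of_real x) * (\<i> * complex_of_real x))"
    proof (rule LIMSEQ_offset[where k=N])
      have XN: "norm (X (n + N) - z0) < d" "X (n + N) \<noteq> z0" for n using N[of "n + N"] X(1) by auto
      have imX: "-l \<le> Im (X (n + N))" "Im (X (n + N)) \<le> 0" for n
      proof -
        have "\<bar>Im (X (n + N) - z0)\<bar> \<le> norm (X (n + N) - z0)" by (rule abs_Im_le_cmod)
        then have "\<bar>Im (X (n + N)) + v0\<bar> < d" using XN(1)[of n] unfolding v0_def by simp
        then show "-l \<le> Im (X (n + N))" "Im (X (n + N)) \<le> 0" using d by auto
      qed
      have eq: "(FF M (X (n + N)) - FF M z0) / (X (n + N) - z0) =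
        (CLINT x|M. (exp (\<i> * X (n + N) * complex_of_real x) - exp (\<i> * z0 * complex_of_real x)) / (X (n + N) - z0))" for n
        unfolding FF_def using int_F[OF imX(1)[of n] imX(2)[of n]] int_F[of z0] z0
        by (simp add: integral_diff)
      show "(\<lambda>n. (FF M (X (n + N)) - FF M z0) / (X (n + N) - z0)) \<longlonglongrightarrow> (CLINT x|M. exp (\<i> * z0 * complex_of_real x) * (\<i> * complex_of_real x))"
        unfolding eq
      proof (rule integral_dominated_convergence[where w=w])
        show "(\<lambda>x. exp (\<i> * z0 * complex_of_real x) * (\<i> * complex_of_real x)) \<in> borel_measurable M" by measurable
        show "(\<lambda>x. (exp (\<i> * X (n + N) * complex_of_real x) - exp (\<i> * z0 * complex_of_real x)) / (X (n + N) - z0)) \<in> borel_measurable M" for n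
          by measurable
        show "integrable M w" by (rule intw)
        show "AE x in M. norm ((exp (\<i> * X (n + N) * complex_of_real x) - exp (\<i> * z0 * complex_of_real x)) / (X (n + N) - z0)) \<le> w x" for n
          using bnd[of "X (n + N)"] XN[of n] by (intro AE_I2) auto
        show "AE x in M. (\<lambda>n. (exp (\<i> * X (n + N) * complex_of_real x) - exp (\<i> * z0 * complex_of_real x)) / (X (n + N) - z0))
            \<longlonglongrightarrow> exp (\<i> * z0 * complex_of_real x) * (\<i> * complex_of_real x)"
        proof (intro AE_I2)
          fix x :: real
          have "((\<lambda>y. exp (\<i> * y * complex_of_real x)) has_field_derivative exp (\<i> * z0 * complex_of_real x) * (\<i> * complex_of_real x)) (at z0)"
            by (auto intro!: derivative_eq_intros)
          then have "((\<lambda>y. (exp (\<i> * y * complex_of_real x) - exp (\<i> * z0 * complex_of_real x)) / (y - z0)) \<longlongrightarrow> exp (\<i> * z0 * complex_of_real x) * (\<i> * complex_of_real x)) (at z0)"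
            unfolding has_field_derivative_iff .
          moreover have "(\<lambda>n. X (n + N)) \<longlonglongrightarrow> z0" using X(2) by (rule LIMSEQ_ignore_initial_segment)
          ultimately show "(\<lambda>n. (exp (\<i> * X (n + N) * complex_of_real x) - exp (\<i> * z0 * complex_of_real x)) / (X (n + N) - z0))
            \<longlonglongrightarrow> exp (\<i> * z0 * complex_of_real x) * (\<i> * complex_of_real x)"
            unfolding tendsto_at_iff_sequentially comp_def using XN(2) by auto
        qed
      qed
    qed
  qed
qed

end
theorem lemma2p2:
  fixes M1 M2 :: "real measure" and l a b :: real
  assumes "real_distribution M1" and "real_distribution M2"
    and "l > 0"
    and "(\<integral>\<^sup>+ x. ennreal (exp (l * x)) \<partial>M1) < \<infinity>"
    and "(\<integral>\<^sup>+ x. ennreal (exp (l * x)) \<partial>M2) < \<infinity>"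
    and "a < b"
    and "\<And>u. u \<in> {a<..<b} \<Longrightarrow> char M1 u = char M2 u"
  shows "M1 = M2"
proof -
  note A = assms
  define G where "G z = FF M1 z - FF M2 z" for z
  define C where "C = {z. -l \<le> Im z \<and> Im z \<le> 0}"
  define T where "T = {z. -l < Im z \<and> Im z < 0}"
  define S where "S = {z. a < Re z \<and> Re z < b \<and> -l < Im z \<and> Im z < l}"
  have contG: "continuous_on C G"
    unfolding G_def C_def
    by (intro continuous_on_diff cont_F[OF A(1) A(3) A(4)] cont_F[OF A(2) A(3) A(5)])
  have openT: "open T" unfolding T_def by (rule open_T)
  have holG: "G holomorphic_on T"
    unfolding holomorphic_on_open[OF openT]
  proof
    fix z assume "z \<in> T"
    then have z: "-l < Im z" "Im z < 0" by (auto simp: T_def)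
    show "\<exists>f'. DERIV G z :> f'"
      unfolding G_def using DERIV_diff[OF deriv_F[OF A(1) A(3) A(4) z] deriv_F[OF A(2) A(3) A(5) z]] by blast
  qed
  have FFchar: "FF M (complex_of_real u) = char M u" for M u
    unfolding FF_def char_def by (simp add: mult.assoc)
  have G0: "G (complex_of_real u) = 0" if "u \<in> {a<..<b}" for u
    unfolding G_def FFchar using A(7)[OF that] by simp
  define f where "f z = (if Im z \<le> 0 then G z else 0)" for z
  have openS: "open S" unfolding S_def by (rule open_S)
  have hf: "f holomorphic_on S"
  proof (rule holomorphic_on_paste_across_line[OF openS, of \<i> f 0])
    show "\<i> \<noteq> 0" by simp
    have "f holomorphic_on (S \<inter> {z. Im z < 0})"
    proof -
      have "G holomorphic_on (S \<inter> {z. Im z < 0})"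
        by (rule holomorphic_on_subset[OF holG]) (auto simp: S_def T_def)
      then show ?thesis by (rule holomorphic_transform) (auto simp: f_def)
    qed
    then show "f holomorphic_on (S \<inter> {z. \<i> \<bullet> z < 0})" by (simp add: inner_complex_def)
    have "f holomorphic_on (S \<inter> {z. 0 < Im z})"
      by (rule holomorphic_transform[of "\<lambda>_. 0"]) (auto simp: f_def)
    then show "f holomorphic_on (S \<inter> {z. 0 < \<i> \<bullet> z})" by (simp add: inner_complex_def)
    have SU: "S = (S \<inter> {z. Im z \<le> 0}) \<union> (S \<inter> {z. 0 \<le> Im z})" by auto
    have "continuous_on ((S \<inter> {z. Im z \<le> 0}) \<union> (S \<inter> {z. 0 \<le> Im z})) (\<lambda>z. if Im z \<le> 0 then G z else 0)"
    proof (rule continuous_on_cases_local)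
      show "closedin (top_of_set (S \<inter> {z. Im z \<le> 0} \<union> S \<inter> {z. 0 \<le> Im z})) (S \<inter> {z. Im z \<le> 0})"
        by (simp add: closedin_closed_Int closed_halfspace_Im_le flip: SU)
      show "closedin (top_of_set (S \<inter> {z. Im z \<le> 0} \<union> S \<inter> {z. 0 \<le> Im z})) (S \<inter> {z. 0 \<le> Im z})"
        by (simp add: closedin_closed_Int closed_halfspace_Im_ge flip: SU)
      show "continuous_on (S \<inter> {z. Im z \<le> 0}) G"
        by (rule continuous_on_subset[OF contG]) (auto simp: S_def C_def)
      show "continuous_on (S \<inter> {z. 0 \<le> Im z}) (\<lambda>z. 0)" by simp
      fix z assume "z \<in> S \<inter> {z. Im z \<le> 0} \<and> \<not> Im z \<le> 0 \<or> z \<in> S \<inter> {z. 0 \<le> Im z} \<and> Im z \<le> 0"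
      then have z: "Im z = 0" "a < Re z" "Re z < b" by (auto simp: S_def)
      then have "z = complex_of_real (Re z)" by (simp add: complex_eq_iff)
      then show "G z = 0" using G0[of "Re z"] z by (metis greaterThanLessThan_iff)
    qed
    then show "continuous_on S f" unfolding f_def by (simp flip: SU)
  qed
  have convS: "convex S" unfolding S_def by (rule convex_S)
  have f0: "f z = 0" if "z \<in> S" for z
  proof (rule analytic_continuation_open[of "S \<inter> {z. 0 < Im z}" S f "\<lambda>_. 0"])
    show "open (S \<inter> {z. 0 < Im z})"
      by (intro open_Int openS) (intro open_Collect_less continuous_intros)
    show "open S" by (rule openS)
    have "Complex ((a + b) / 2) (l / 2) \<in> S \<inter> {z. 0 < Im z}" using A(3) A(6) by (auto simp: S_def)
    then show "S \<inter> {z. 0 < Im z} \<noteq> {}" by blast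
    show "connected S" using convS by (rule convex_connected)
    show "S \<inter> {z. 0 < Im z} \<subseteq> S" by blast
    show "f holomorphic_on S" by (rule hf)
    show "(\<lambda>_. 0) holomorphic_on S" by simp
    show "f z = 0" if "z \<in> S \<inter> {z. 0 < Im z}" for z using that by (simp add: f_def)
    show "z \<in> S" by (rule that)
  qed
  have convT: "convex T"
  proof -
    have "T = {z. Im z > -l} \<inter> {z. Im z < 0}" by (auto simp: T_def)
    then show ?thesis by (simp add: convex_Int convex_halfspace_Im_gt convex_halfspace_Im_lt)
  qed
  have GT0: "G z = 0" if "z \<in> T" for z
  proof (rule analytic_continuation_open[of "S \<inter> {z. Im z < 0}" T G "\<lambda>_. 0"])
    show "open (S \<inter> {z. Im z < 0})"
      by (intro open_Int openS) (intro open_Collect_less continuous_intros)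
    show "open T" by (rule openT)
    have "Complex ((a + b) / 2) (- l / 2) \<in> S \<inter> {z. Im z < 0}" using A(3) A(6) by (auto simp: S_def)
    then show "S \<inter> {z. Im z < 0} \<noteq> {}" by blast
    show "connected T" using convT by (rule convex_connected)
    show "S \<inter> {z. Im z < 0} \<subseteq> T" by (auto simp: S_def T_def)
    show "G holomorphic_on T" by (rule holG)
    show "(\<lambda>_. 0) holomorphic_on T" by simp
    show "G z = 0" if "z \<in> S \<inter> {z. Im z < 0}" for z using that f0[of z] by (simp add: f_def)
    show "z \<in> T" by (rule that)
  qed
  have "char M1 u = char M2 u" for u
  proof -
    define Z where "Z n = complex_of_real u - \<i> * complex_of_real (l / 2 * inverse (real (Suc n)))" for n
    have ZT: "Z n \<in> T" for n
    proof -
      define t where "t = l / 2 * inverse (real (Suc n))"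
      have "0 < t" "t \<le> l / 2"
        using A(3) by (auto simp: field_simps t_def)
      moreover have "Im (Z n) = - t" unfolding Z_def t_def[symmetric] by simp
      ultimately show ?thesis using A(3) unfolding T_def by simp
    qed
    have "(\<lambda>n. l / 2 * inverse (real (Suc n))) \<longlonglongrightarrow> l / 2 * 0"
      by (intro tendsto_mult tendsto_const LIMSEQ_inverse_real_of_nat)
    then have "Z \<longlonglongrightarrow> complex_of_real u - \<i> * complex_of_real 0"
      unfolding Z_def by (intro tendsto_intros) simp
    then have Zl: "Z \<longlonglongrightarrow> complex_of_real u" by simp
    have "(\<lambda>n. G (Z n)) \<longlonglongrightarrow> G (complex_of_real u)"
    proof (rule continuous_on_tendsto_compose[OF contG Zl])
      show "complex_of_real u \<in> C" using A(3) by (simp add: C_def)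
      have "Z n \<in> C" for n using ZT[of n] unfolding T_def C_def by simp
      then show "\<forall>\<^sub>F n in sequentially. Z n \<in> C" by (intro always_eventually) blast
    qed
    moreover have "(\<lambda>n. G (Z n)) = (\<lambda>n. 0)" using GT0 ZT by blast
    ultimately have "(\<lambda>n. 0::complex) \<longlonglongrightarrow> G (complex_of_real u)" by simp
    then have "G (complex_of_real u) = 0" by (simp add: LIMSEQ_const_iff)
    then show ?thesis unfolding G_def FFchar by simp
  qed
  then show ?thesis using Levy_uniqueness[OF A(1) A(2)] by blast
qed


end
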